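(* Consider any run of Algorithm 1 (described in the context) under the standing assumption. The number of unsuccessful iterations that occur before an $(\epsilon_g,\epsilon_H)$-stationary point is reached is either zero or else satisfies \[ |\mathcal{U}|\ \le\ \Big\lfloor 1+\log_{\gamma_1}\Big(\tfrac{3(1-\eta)}{L_H\delta_{\max}}\Big)+\log_{\gamma_1}(\epsilon_H)\Big\rfloor\,|\mathcal{S}|. \]
   Context: Let $f:\mathbb{R}^n\to\mathbb{R}$ with gradient $g=\nabla f$ and Hessian $H=\nabla^2 f$; $\|\cdot\|$ is the Euclidean norm and $\lambda_{\min}(\cdot)$ the smallest eigenvalue of a symmetric matrix. A point $x$ is $(\epsilon_g,\epsilon_H)$-stationary if $\|g(x)\|\le\epsilon_g$ and $\lambda_{\min}(H(x))\ge-\epsilon_H$. Write $f_k=f(x_k)$, $g_k=g(x_k)$, $H_k=H(x_k)$ and $m_k(x):=f_k+g_k^T(x-x_k)+\tfrac12(x-x_k)^TH_k(x-x_k)$. Algorithm 1 (exact trust-region Newton method). Inputs: tolerances $\epsilon_g,\epsilon_H>0$; parameters $\gamma_1\in(0,1)$, $\gamma_2\in[1,\infty)$, $\psi\in(1/\gamma_2,1]$; $x_0\in\mathbb{R}^n$; $\delta_0>0$; $\delta_{\max}\ge\delta_0$; $\eta\in(0,1)$. For $k=0,1,2,\dots$: evaluate $g_k,H_k$; if $\|g_k\|\le\epsilon_g$, compute $\lambda_k=\lambda_{\min}(H_k)$ and, if $\lambda_k\ge-\epsilon_H$, return $x_k$ (terminate). Otherwise compute $s_k$ as a global solution of $\min_{s}\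 m_k(x_k+s)+\tfrac12\epsilon_H\|s\|^2$ subject to $\|s\|\le\delta_k$. Set $\rho_k=\frac{f_k-f(x_k+s_k)}{m_k(x_k)-m_k(x_k+s_k)}$. If $\rho_k\ge\eta$: $x_{k+1}=x_k+s_k$, and $\delta_{k+1}=\min\{\gamma_2\delta_k,\delta_{\max}\}$ if $\|s_k\|\ge\psi\delta_k$, else $\delta_{k+1}=\delta_k$. If $\rho_k<\eta$: $x_{k+1}=x_k$ and $\delta_{k+1}=\gamma_1\|s_k\|$. $\mathcal{K}$ is the set of indices $k$ such that iteration $k$ is completed without termination; $\mathcal{S}=\{k\in\mathcal{K}:\rho_k\ge\eta\}$ (successful), $\mathcal{U}=\{k\in\mathcal{K}:\rho_k<\eta\}$ (unsuccessful). Standing assumption: the sequence $\{f_k\}$ is bounded below by some $f_{\rm low}\in\mathbb{R}$, and all segments $[x_k,x_k+s_k]$ lie in an open set on which $f$ is twice continuously differentiable with gradient Lipschitz continuous with constant $L_g>0$ and Hessian Lipschitz continuous with constant $L_H>0$. *)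

theory Defs
  imports "HOL-Analysis.Analysis"
begin

text \<open>Smallest eigenvalue of a (symmetric) real square matrix: the infimum of its
  real eigenvalues (for symmetric matrices all eigenvalues are real and this is the minimum).\<close>
definition lambda_min :: "real^'n^'n \<Rightarrow> real" where
  "lambda_min A = Inf {l. \<exists>v. v \<noteq> 0 \<and> A *v v = l *\<^sub>R v}"

definition tr_model ::
  "(real^'n \<Rightarrow> real) \<Rightarrow> (real^'n \<Rightarrow> real^'n) \<Rightarrow> (real^'n \<Rightarrow> real^'n^'n)
     \<Rightarrow> real^'n \<Rightarrow> real^'n \<Rightarrow> real" where
  "tr_model f g H xk x = f xk + g xk \<bullet> (x - xk) + (1/2) * ((x - xk) \<bullet> (H xk *v (x - xk)))"

definition stationary ::
  "(real^'n \<Rightarrow> real^'n) \<Rightarrow> (real^'n \<Rightarrow> real^'n^'n) \<Rightarrow> real \<Rightarrow> real \<Rightarrow> real^'n \<Rightarrow> bool" where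
  "stationary g H eg eH x \<longleftrightarrow> norm (g x) \<le> eg \<and> lambda_min (H x) \<ge> - eH"

end

theory Submission
  imports Defs
begin


lemma taylor_1d_aux:
  fixes \<phi> \<phi>1 \<phi>2 :: "real \<Rightarrow> real" and M \<sigma> :: real
  assumes d1: "\<And>t. 0 \<le> t \<Longrightarrow> t \<le> 1 \<Longrightarrow> (\<phi> has_real_derivative \<phi>1 t) (at t)"
    and d2: "\<And>t. 0 \<le> t \<Longrightarrow> t \<le> 1 \<Longrightarrow> (\<phi>1 has_real_derivative \<phi>2 t) (at t)"
    and b: "\<And>t. 0 \<le> t \<Longrightarrow> t \<le> 1 \<Longrightarrow> \<bar>\<phi>2 t - \<phi>2 0\<bar> \<le> M * t"
    and s: "\<bar>\<sigma>\<bar> = 1"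
  shows "\<sigma> * (\<phi> 1 - \<phi> 0 - \<phi>1 0 - \<phi>2 0 / 2) \<le> M / 6"
proof -
  define v where "v t = M * t^2 / 2 - \<sigma> * (\<phi>1 t - \<phi>1 0 - t * \<phi>2 0)" for t
  define u where "u t = M * t^3 / 6 - \<sigma> * (\<phi> t - \<phi> 0 - t * \<phi>1 0 - t^2/2 * \<phi>2 0)" for t
  have vd: "(v has_real_derivative (M * t - \<sigma> * (\<phi>2 t - \<phi>2 0))) (at t)" if "0 \<le> t" "t \<le> 1" for t
    unfolding v_def
    by (rule derivative_eq_intros refl d2 that | simp)+
  have ud: "(u has_real_derivative v t) (at t)" if "0 \<le> t" "t \<le> 1" for t
    unfolding u_def v_def
    by (rule derivative_eq_intros refl d1 that | simp add: algebra_simps)+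
  have vnn: "v t \<ge> 0" if "0 \<le> t" "t \<le> 1" for t
  proof -
    have "v 0 \<le> v t"
    proof (rule DERIV_nonneg_imp_nondecreasing[OF that(1)])
      fix y assume y: "0 \<le> y" "y \<le> t"
      have "\<sigma> * (\<phi>2 y - \<phi>2 0) \<le> M * y"
      proof -
        have "\<sigma> * (\<phi>2 y - \<phi>2 0) \<le> \<bar>\<sigma>\<bar> * \<bar>\<phi>2 y - \<phi>2 0\<bar>"
          by (metis abs_ge_self abs_mult)
        then show ?thesis using b[of y] y that s by simp
      qed
      then show "\<exists>z. (v has_real_derivative z) (at y) \<and> z \<ge> 0"
        using vd[of y] y that by (intro exI[of _ "M * y - \<sigma> * (\<phi>2 y - \<phi>2 0)"]) auto
    qed
    then show ?thesis by (simp add: v_def)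
  qed
  have "u 0 \<le> u 1"
    by (rule DERIV_nonneg_imp_nondecreasing[of 0 1]) (use ud vnn in auto)
  then show ?thesis by (simp add: u_def algebra_simps)
qed



lemma line_deriv_f:
  fixes f :: "'a::real_inner \<Rightarrow> real"
  assumes "(f has_derivative (\<lambda>h. gy \<bullet> h)) (at (y + t *\<^sub>R d))"
  shows "((\<lambda>t. f (y + t *\<^sub>R d)) has_real_derivative (gy \<bullet> d)) (at t)"
proof -
  have "((\<lambda>t. y + t *\<^sub>R d) has_derivative (\<lambda>h. h *\<^sub>R d)) (at t)"
    by (rule derivative_eq_intros refl | simp)+
  from has_derivative_compose[OF this assms]
  have "((\<lambda>t. f (y + t *\<^sub>R d)) has_derivative (\<lambda>h. gy \<bullet> (h *\<^sub>R d))) (at t)"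
    by (simp add: o_def)
  then show ?thesis
    unfolding has_field_derivative_def by (simp add: mult.commute[of _ "gy \<bullet> d"])
qed

lemma line_deriv_g:
  fixes g :: "real^'n \<Rightarrow> real^'n"
  assumes "(g has_derivative (\<lambda>h. Hy *v h)) (at (y + t *\<^sub>R d))"
  shows "((\<lambda>t. g (y + t *\<^sub>R d) \<bullet> w) has_real_derivative ((Hy *v d) \<bullet> w)) (at t)"
proof -
  have "((\<lambda>t. y + t *\<^sub>R d) has_derivative (\<lambda>h. h *\<^sub>R d)) (at t)"
    by (rule derivative_eq_intros refl | simp)+
  from has_derivative_compose[OF this assms]
  have "((\<lambda>t. g (y + t *\<^sub>R d)) has_derivative (\<lambda>h. Hy *v (h *\<^sub>R d))) (at t)"
    by (simp add: o_def)
  from has_derivative_inner_left[OF this, of w]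
  have "((\<lambda>t. g (y + t *\<^sub>R d) \<bullet> w) has_derivative (\<lambda>h. (Hy *v (h *\<^sub>R d)) \<bullet> w)) (at t)" .
  then show ?thesis
    unfolding has_field_derivative_def
    by (simp add: matrix_vector_mult_scaleR mult.commute[of _ "(Hy *v d) \<bullet> w"])
qed

lemma seg_point:
  assumes "closed_segment y (y + d) \<subseteq> D" "0 \<le> t" "t \<le> 1"
  shows "y + t *\<^sub>R d \<in> D"
proof -
  have "y + t *\<^sub>R d = (1 - t) *\<^sub>R y + t *\<^sub>R (y + d)" by (simp add: algebra_simps)
  then have "y + t *\<^sub>R d \<in> closed_segment y (y + d)" using assms(2,3) by (auto simp: in_segment)
  then show ?thesis using assms(1) by blast
qed

lemma mat_quad_bound:
  fixes A :: "real^'n^'n"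
  shows "\<bar>(A *v d) \<bullet> w\<bar> \<le> onorm (\<lambda>v. A *v v) * norm d * norm w"
proof -
  have "\<bar>(A *v d) \<bullet> w\<bar> \<le> norm (A *v d) * norm w" by (rule Cauchy_Schwarz_ineq2)
  also have "\<dots> \<le> onorm (\<lambda>v. A *v v) * norm d * norm w"
    by (intro mult_right_mono onorm) auto
  finally show ?thesis .
qed

lemma taylor3:
  fixes f :: "real^'n \<Rightarrow> real" and g :: "real^'n \<Rightarrow> real^'n" and H :: "real^'n \<Rightarrow> real^'n^'n"
  assumes seg: "closed_segment y (y + d) \<subseteq> D"
    and grad: "\<And>y. y \<in> D \<Longrightarrow> (f has_derivative (\<lambda>h. g y \<bullet> h)) (at y)"
    and hess: "\<And>y. y \<in> D \<Longrightarrow> (g has_derivative (\<lambda>h. H y *v h)) (at y)"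
    and H_lip: "\<And>y z. y \<in> D \<Longrightarrow> z \<in> D \<Longrightarrow> onorm (\<lambda>v. (H y - H z) *v v) \<le> LH * norm (y - z)"
  shows "\<bar>f (y + d) - f y - g y \<bullet> d - 1/2 * (d \<bullet> (H y *v d))\<bar> \<le> LH / 6 * norm d ^ 3"
proof -
  define \<phi> where "\<phi> t = f (y + t *\<^sub>R d)" for t
  define \<phi>1 where "\<phi>1 t = g (y + t *\<^sub>R d) \<bullet> d" for t
  define \<phi>2 where "\<phi>2 t = (H (y + t *\<^sub>R d) *v d) \<bullet> d" for t
  have y: "y \<in> D" using seg_point[OF seg, of 0] by simp
  have d1: "(\<phi> has_real_derivative \<phi>1 t) (at t)" if "0 \<le> t" "t \<le> 1" for t
    unfolding \<phi>_def \<phi>1_def by (rule line_deriv_f, rule grad, rule seg_point[OF seg that])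
  have d2: "(\<phi>1 has_real_derivative \<phi>2 t) (at t)" if "0 \<le> t" "t \<le> 1" for t
    unfolding \<phi>2_def \<phi>1_def by (rule line_deriv_g, rule hess, rule seg_point[OF seg that])
  have b: "\<bar>\<phi>2 t - \<phi>2 0\<bar> \<le> LH * norm d ^ 3 * t" if "0 \<le> t" "t \<le> 1" for t
  proof -
    have "\<phi>2 t - \<phi>2 0 = ((H (y + t *\<^sub>R d) - H y) *v d) \<bullet> d"
      by (simp add: \<phi>2_def matrix_vector_mult_diff_rdistrib inner_diff_left)
    also have "\<bar>\<dots>\<bar> \<le> onorm (\<lambda>v. (H (y + t *\<^sub>R d) - H y) *v v) * norm d * norm d"
      by (rule mat_quad_bound)
    also have "\<dots> \<le> (LH * norm (y + t *\<^sub>R d - y)) * norm d * norm d"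
      by (intro mult_right_mono H_lip seg_point[OF seg that] y) auto
    also have "\<dots> = LH * norm d ^ 3 * t" using that by (simp add: power3_eq_cube)
    finally show ?thesis .
  qed
  have e: "\<phi> 1 - \<phi> 0 - \<phi>1 0 - \<phi>2 0 / 2 = f (y + d) - f y - g y \<bullet> d - 1/2 * (d \<bullet> (H y *v d))"
    by (simp add: \<phi>_def \<phi>1_def \<phi>2_def inner_commute)
  have "1 * (\<phi> 1 - \<phi> 0 - \<phi>1 0 - \<phi>2 0 / 2) \<le> LH * norm d ^ 3 / 6"
    by (rule taylor_1d_aux[OF d1 d2 b]) auto
  moreover have "(-1) * (\<phi> 1 - \<phi> 0 - \<phi>1 0 - \<phi>2 0 / 2) \<le> LH * norm d ^ 3 / 6"
    by (rule taylor_1d_aux[OF d1 d2 b]) auto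
  ultimately show ?thesis unfolding e abs_le_iff by auto
qed



lemma grad_remainder:
  fixes g :: "real^'n \<Rightarrow> real^'n" and H :: "real^'n \<Rightarrow> real^'n^'n"
  assumes seg: "closed_segment x (x + d) \<subseteq> D"
    and hess: "\<And>y. y \<in> D \<Longrightarrow> (g has_derivative (\<lambda>h. H y *v h)) (at y)"
    and H_lip: "\<And>y z. y \<in> D \<Longrightarrow> z \<in> D \<Longrightarrow> onorm (\<lambda>v. (H y - H z) *v v) \<le> LH * norm (y - z)"
    and LH: "LH \<ge> 0"
  shows "\<bar>(g (x + d) - g x - H x *v d) \<bullet> w\<bar> \<le> LH * norm d ^ 2 * norm w"
proof -
  have x: "x \<in> D" using seg_point[OF seg, of 0] by simp
  have der: "((\<lambda>t. g (x + t *\<^sub>R d) \<bullet> w) has_real_derivative ((H (x + t *\<^sub>R d) *v d) \<bullet> w)) (at t)"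
    if "0 \<le> t" "t \<le> 1" for t
    by (rule line_deriv_g, rule hess, rule seg_point[OF seg that])
  obtain \<xi> where \<xi>: "0 < \<xi>" "\<xi> < 1"
    and eq: "g (x + 1 *\<^sub>R d) \<bullet> w - g (x + 0 *\<^sub>R d) \<bullet> w = (1 - 0) * ((H (x + \<xi> *\<^sub>R d) *v d) \<bullet> w)"
    using MVT2[of 0 1 "\<lambda>t. g (x + t *\<^sub>R d) \<bullet> w" "\<lambda>t. (H (x + t *\<^sub>R d) *v d) \<bullet> w"] der by auto
  have "(g (x + d) - g x - H x *v d) \<bullet> w = ((H (x + \<xi> *\<^sub>R d) - H x) *v d) \<bullet> w"
    using eq by (simp add: inner_diff_left matrix_vector_mult_diff_rdistrib)
  also have "\<bar>\<dots>\<bar> \<le> onorm (\<lambda>v. (H (x + \<xi> *\<^sub>R d) - H x) *v v) * norm d * norm w"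
    by (rule mat_quad_bound)
  also have "\<dots> \<le> (LH * norm (x + \<xi> *\<^sub>R d - x)) * norm d * norm w"
    using \<xi> LH by (intro mult_right_mono H_lip seg_point[OF seg] x) auto
  also have "\<dots> = LH * \<xi> * norm d ^ 2 * norm w" using \<xi> by (simp add: power2_eq_square)
  also have "\<dots> \<le> LH * norm d ^ 2 * norm w"
    using LH \<xi> by (intro mult_right_mono) (auto intro: mult_left_le)
  finally show ?thesis .
qed



lemma delta_bound:
  fixes f :: "real^'n \<Rightarrow> real" and g :: "real^'n \<Rightarrow> real^'n" and H :: "real^'n \<Rightarrow> real^'n^'n"
  assumes ball: "ball x r \<subseteq> D" and hk: "norm h + norm k < r"
    and grad: "\<And>y. y \<in> D \<Longrightarrow> (f has_derivative (\<lambda>h. g y \<bullet> h)) (at y)"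
    and hess: "\<And>y. y \<in> D \<Longrightarrow> (g has_derivative (\<lambda>h. H y *v h)) (at y)"
    and H_lip: "\<And>y z. y \<in> D \<Longrightarrow> z \<in> D \<Longrightarrow> onorm (\<lambda>v. (H y - H z) *v v) \<le> LH * norm (y - z)"
    and LH: "LH \<ge> 0"
  shows "\<bar>(f (x + h + k) - f (x + h) - f (x + k) + f x) - (H x *v k) \<bullet> h\<bar>
           \<le> LH * ((norm h + norm k)^2 + norm h ^ 2) * norm h"
proof -
  have inb: "x + v \<in> D" if "norm v < r" for v
    using that ball by (auto simp: dist_norm)
  have segb: "closed_segment x (x + v) \<subseteq> D" if "norm v < r" for v
  proof -
    have r0: "0 < r" using that norm_ge_zero[of v] by linarith
    have "closed_segment x (x + v) \<subseteq> ball x r"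
      using that r0 by (intro closed_segment_subset) (auto simp: dist_norm)
    then show ?thesis using ball by blast
  qed
  have nb: "norm (k + t *\<^sub>R h) < r" "norm (t *\<^sub>R h) < r" if "0 \<le> t" "t \<le> 1" for t
  proof -
    have "norm (t *\<^sub>R h) \<le> norm h" using that by (simp add: mult_left_le_one_le)
    then show "norm (k + t *\<^sub>R h) < r" "norm (t *\<^sub>R h) < r"
      using norm_triangle_ineq[of k "t *\<^sub>R h"] hk norm_ge_zero[of k] by linarith+
  qed
  define \<phi> where "\<phi> t = f ((x + k) + t *\<^sub>R h) - f (x + t *\<^sub>R h)" for t
  have der: "(\<phi> has_real_derivative (g ((x + k) + t *\<^sub>R h) \<bullet> h - g (x + t *\<^sub>R h) \<bullet> h)) (at t)"
    if "0 \<le> t" "t \<le> 1" for t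
  proof -
    have a: "(x + k) + t *\<^sub>R h \<in> D" using inb[OF nb(1)[OF that]] by (simp add: add.assoc)
    have b: "x + t *\<^sub>R h \<in> D" using inb[OF nb(2)[OF that]] .
    show ?thesis unfolding \<phi>_def
      by (intro DERIV_diff line_deriv_f grad a b)
  qed
  obtain \<xi> where \<xi>: "0 < \<xi>" "\<xi> < 1"
    and eq: "\<phi> 1 - \<phi> 0 = (1 - 0) * (g ((x + k) + \<xi> *\<^sub>R h) \<bullet> h - g (x + \<xi> *\<^sub>R h) \<bullet> h)"
    using MVT2[of 0 1 \<phi> "\<lambda>t. g ((x + k) + t *\<^sub>R h) \<bullet> h - g (x + t *\<^sub>R h) \<bullet> h"] der by auto
  define d1 where "d1 = k + \<xi> *\<^sub>R h"
  define d2 where "d2 = \<xi> *\<^sub>R h"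
  have "(f (x + h + k) - f (x + h) - f (x + k) + f x) - (H x *v k) \<bullet> h
     = (g (x + d1) - g x - H x *v d1) \<bullet> h - (g (x + d2) - g x - H x *v d2) \<bullet> h"
    using eq unfolding \<phi>_def d1_def d2_def
    by (simp add: algebra_simps inner_diff_left inner_add_left matrix_vector_right_distrib)
  also have "\<bar>\<dots>\<bar> \<le> LH * norm d1 ^ 2 * norm h + LH * norm d2 ^ 2 * norm h"
    using grad_remainder[OF segb[OF nb(1)] hess H_lip LH, of \<xi> h]
      grad_remainder[OF segb[OF nb(2)] hess H_lip LH, of \<xi> h] \<xi>
    unfolding d1_def d2_def by (simp add: abs_le_iff)
  also have "\<dots> \<le> LH * ((norm h + norm k)^2 + norm h ^ 2) * norm h"
  proof -
    have n2: "norm d2 \<le> norm h" using \<xi> by (simp add: d2_def mult_left_le_one_le)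
    have n1: "norm d1 \<le> norm h + norm k"
      using norm_triangle_ineq[of k "\<xi> *\<^sub>R h"] n2 unfolding d1_def d2_def by linarith
    have "norm d1 ^ 2 \<le> (norm h + norm k) ^ 2" by (rule power_mono[OF n1]) simp
    moreover have "norm d2 ^ 2 \<le> norm h ^ 2" by (rule power_mono[OF n2]) simp
    ultimately have "norm d1 ^ 2 + norm d2 ^ 2 \<le> (norm h + norm k)^2 + norm h ^ 2" by (rule add_mono)
    then have "LH * (norm d1 ^ 2 + norm d2 ^ 2) * norm h \<le> LH * ((norm h + norm k)^2 + norm h ^ 2) * norm h"
      using LH by (intro mult_right_mono mult_left_mono) auto
    then show ?thesis by (simp add: algebra_simps)
  qed
  finally show ?thesis .
qed



lemma small_bound_zero:
  fixes q C r :: real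
  assumes r: "r > 0" and C: "C \<ge> 0" and b: "\<And>t. 0 < t \<Longrightarrow> t < r \<Longrightarrow> \<bar>q\<bar> \<le> t * C"
  shows "q = 0"
proof (rule ccontr)
  assume q: "q \<noteq> 0"
  define t where "t = min (r / 2) (\<bar>q\<bar> / (2 * (C + 1)))"
  have t0: "0 < t" using r q C by (simp add: t_def)
  have tr: "t < r" using r by (simp add: t_def)
  have "t * C \<le> (\<bar>q\<bar> / (2 * (C + 1))) * C" using C by (intro mult_right_mono) (auto simp: t_def)
  also have "\<dots> < \<bar>q\<bar>"
  proof -
    have "0 < C * \<bar>q\<bar> + \<bar>q\<bar> * 2" using q C by (simp add: add_nonneg_pos)
    then show ?thesis using q C by (simp add: field_simps)
  qed
  finally show False using b[OF t0 tr] by simp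
qed

lemma hess_sym:
  fixes f :: "real^'n \<Rightarrow> real" and g :: "real^'n \<Rightarrow> real^'n" and H :: "real^'n \<Rightarrow> real^'n^'n"
  assumes D: "open D" and x: "x \<in> D"
    and grad: "\<And>y. y \<in> D \<Longrightarrow> (f has_derivative (\<lambda>h. g y \<bullet> h)) (at y)"
    and hess: "\<And>y. y \<in> D \<Longrightarrow> (g has_derivative (\<lambda>h. H y *v h)) (at y)"
    and H_lip: "\<And>y z. y \<in> D \<Longrightarrow> z \<in> D \<Longrightarrow> onorm (\<lambda>v. (H y - H z) *v v) \<le> LH * norm (y - z)"
    and LH: "LH \<ge> 0"
  shows "(H x *v a) \<bullet> b = a \<bullet> (H x *v b)"
proof -
  obtain r where r: "r > 0" "ball x r \<subseteq> D" using D x open_contains_ball by blast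
  define Ca where "Ca = LH * ((norm a + norm b)^2 + norm a ^ 2) * norm a"
  define Cb where "Cb = LH * ((norm b + norm a)^2 + norm b ^ 2) * norm b"
  define R where "R = r / (norm a + norm b + 1)"
  have R: "R > 0" using r by (simp add: R_def add_nonneg_pos)
  have Ca: "Ca \<ge> 0" "Cb \<ge> 0" using LH by (simp_all add: Ca_def Cb_def)
  have "(H x *v b) \<bullet> a - (H x *v a) \<bullet> b = 0"
  proof (rule small_bound_zero[OF R add_nonneg_nonneg[OF Ca]])
    fix t assume t: "0 < t" "t < R"
    have "t * (norm a + norm b) \<le> t * (norm a + norm b + 1)" using t by simp
    also have "\<dots> < R * (norm a + norm b + 1)" using t
      by (intro mult_strict_right_mono) (auto simp: add_nonneg_pos)
    also have "\<dots> = r"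
    proof -
      have "norm a + norm b + 1 > 0" by (simp add: add_nonneg_pos)
      then show ?thesis by (simp add: R_def)
    qed
    finally have tr: "t * (norm a + norm b) < r" .
    have n: "norm (t *\<^sub>R a) = t * norm a" "norm (t *\<^sub>R b) = t * norm b" using t by auto
    have e1: "\<bar>(f (x + t *\<^sub>R a + t *\<^sub>R b) - f (x + t *\<^sub>R a) - f (x + t *\<^sub>R b) + f x) - t^2 * ((H x *v b) \<bullet> a)\<bar>
        \<le> t^3 * Ca"
      using delta_bound[OF r(2), of "t *\<^sub>R a" "t *\<^sub>R b", OF _ grad hess H_lip LH] tr t
      by (simp add: n Ca_def algebra_simps matrix_vector_mult_scaleR power2_eq_square power3_eq_cube)
    have e2: "\<bar>(f (x + t *\<^sub>R b + t *\<^sub>R a) - f (x + t *\<^sub>R b) - f (x + t *\<^sub>R a) + f x) - t^2 * ((H x *v a) \<bullet> b)\<bar>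
        \<le> t^3 * Cb"
      using delta_bound[OF r(2), of "t *\<^sub>R b" "t *\<^sub>R a", OF _ grad hess H_lip LH] tr t
      by (simp add: n Cb_def algebra_simps matrix_vector_mult_scaleR power2_eq_square power3_eq_cube)
    have sw: "x + t *\<^sub>R b + t *\<^sub>R a = x + t *\<^sub>R a + t *\<^sub>R b" by (simp add: algebra_simps)
    have "\<bar>t^2 * ((H x *v b) \<bullet> a) - t^2 * ((H x *v a) \<bullet> b)\<bar> \<le> t^3 * Ca + t^3 * Cb"
      using e1 e2 unfolding sw abs_le_iff by linarith
    then have "t^2 * \<bar>(H x *v b) \<bullet> a - (H x *v a) \<bullet> b\<bar> \<le> t^3 * Ca + t^3 * Cb"
      by (simp add: abs_mult right_diff_distrib[symmetric])
    then have "t^2 * \<bar>(H x *v b) \<bullet> a - (H x *v a) \<bullet> b\<bar> \<le> t^2 * (t * (Ca + Cb))"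
      by (simp add: algebra_simps power3_eq_cube power2_eq_square)
    then show "\<bar>(H x *v b) \<bullet> a - (H x *v a) \<bullet> b\<bar> \<le> t * (Ca + Cb)"
      using t by (simp add: mult_le_cancel_left)
  qed
  then show ?thesis by (simp add: inner_commute)
qed



lemma quad_cont: "continuous_on S (\<lambda>v. v \<bullet> ((A::real^'n^'n) *v v))"
proof -
  have "continuous_on S (\<lambda>v. A *v v)"
    using matrix_vector_mul_bounded_linear[of A] linear_continuous_on by blast
  then show ?thesis by (intro continuous_intros)
qed

lemma sym_eigen:
  fixes A :: "real^'n^'n"
  assumes sym: "\<And>a b. (A *v a) \<bullet> b = a \<bullet> (A *v b)"
  shows "\<exists>v l. v \<noteq> 0 \<and> A *v v = l *\<^sub>R v"
proof -
  obtain v where v: "v \<in> sphere (0::real^'n) 1" and vmin: "\<And>y. y \<in> sphere 0 1 \<Longrightarrow> v \<bullet> (A *v v) \<le> y \<bullet> (A *v y)"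
    using continuous_attains_inf[OF compact_sphere _ quad_cont, of 0 1 A] by fastforce
  define \<mu> where "\<mu> = v \<bullet> (A *v v)"
  have nv: "norm v = 1" using v by simp
  have psd: "w \<bullet> (A *v w) \<ge> \<mu> * (w \<bullet> w)" for w
  proof (cases "w = 0")
    case True then show ?thesis by simp
  next
    case False
    define u where "u = (1 / norm w) *\<^sub>R w"
    have "u \<in> sphere 0 1" using False by (simp add: u_def)
    then have "\<mu> \<le> u \<bullet> (A *v u)" using vmin \<mu>_def by blast
    also have "u \<bullet> (A *v u) = (w \<bullet> (A *v w)) / (norm w)^2"
      by (simp add: u_def matrix_vector_mult_scaleR power2_eq_square)
    finally have "\<mu> * (norm w)^2 \<le> w \<bullet> (A *v w)" using False by (simp add: field_simps)
    then show ?thesis by (simp add: power2_norm_eq_inner)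
  qed
  define z where "z = A *v v - \<mu> *\<^sub>R v"
  define p where "p = z \<bullet> z"
  define r where "r = z \<bullet> (A *v z) - \<mu> * (z \<bullet> z)"
  have r0: "r \<ge> 0" using psd[of z] by (simp add: r_def)
  have quad: "2 * t * p + t^2 * r \<ge> 0" for t
  proof -
    have "(v + t *\<^sub>R z) \<bullet> (A *v (v + t *\<^sub>R z)) - \<mu> * ((v + t *\<^sub>R z) \<bullet> (v + t *\<^sub>R z)) \<ge> 0"
      using psd[of "v + t *\<^sub>R z"] by simp
    moreover have "(v + t *\<^sub>R z) \<bullet> (A *v (v + t *\<^sub>R z)) - \<mu> * ((v + t *\<^sub>R z) \<bullet> (v + t *\<^sub>R z))
        = (v \<bullet> (A *v v) - \<mu> * (v \<bullet> v)) + t * (v \<bullet> (A *v z) + z \<bullet> (A *v v) - 2 * \<mu> * (v \<bullet> z))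
          + t^2 * (z \<bullet> (A *v z) - \<mu> * (z \<bullet> z))"
      by (simp add: matrix_vector_right_distrib matrix_vector_mult_scaleR inner_add_left inner_add_right
          algebra_simps power2_eq_square inner_commute[of z v])
    moreover have "v \<bullet> (A *v v) - \<mu> * (v \<bullet> v) = 0"
      using nv by (simp add: \<mu>_def power2_norm_eq_inner[symmetric])
    moreover have "v \<bullet> (A *v z) = z \<bullet> (A *v v)"
      using sym[of v z] by (simp add: inner_commute)
    moreover have "z \<bullet> (A *v v) - \<mu> * (v \<bullet> z) = p"
      by (simp add: p_def z_def inner_diff_left inner_diff_right inner_commute algebra_simps)
    ultimately show ?thesis by (simp add: r_def algebra_simps)
  qed
  have "p = 0"
  proof -
    have "2 * (- p / (r + 2)) * p + (- p / (r + 2))^2 * r \<ge> 0" by (rule quad)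
    moreover have "2 * (- p / (r + 2)) * p + (- p / (r + 2))^2 * r = - (p^2 * (r + 4)) / (r + 2)^2"
      using r0 by (simp add: divide_simps power2_eq_square) (simp add: algebra_simps)
    ultimately have "p^2 * (r + 4) / (r + 2)^2 \<le> 0" by simp
    moreover have "(r + 2)^2 > 0" "r + 4 > 0" using r0 by auto
    ultimately have "p^2 \<le> 0" by (simp add: divide_le_0_iff zero_le_mult_iff mult_le_0_iff)
    then show ?thesis by simp
  qed
  then have "z = 0" by (simp add: p_def)
  then show ?thesis using nv by (intro exI[of _ v] exI[of _ \<mu>]) (auto simp: z_def)
qed



theorem lemma2p5:
  fixes f :: "real^'n \<Rightarrow> real"
    and g :: "real^'n \<Rightarrow> real^'n"
    and H :: "real^'n \<Rightarrow> real^'n^'n"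
    and x s :: "nat \<Rightarrow> real^'n"
    and \<delta> \<rho> :: "nat \<Rightarrow> real"
    and eg eH \<gamma>1 \<gamma>2 \<psi> \<delta>0 \<delta>max \<eta> Lg LH flow :: real
    and D :: "(real^'n) set"
    and K S U :: "nat set"
  assumes eg: "eg > 0" and eH: "eH > 0"
    and g1: "0 < \<gamma>1" "\<gamma>1 < 1"
    and g2: "\<gamma>2 \<ge> 1"
    and psi: "1 / \<gamma>2 < \<psi>" "\<psi> \<le> 1"
    and d0: "\<delta>0 > 0" and dmax: "\<delta>max \<ge> \<delta>0"
    and eta: "0 < \<eta>" "\<eta> < 1"
    and x0_delta0: "\<delta> 0 = \<delta>0"
    (* iterations completed without termination *)
    and K_def: "K = {k. \<forall>j\<le>k. \<not> stationary g H eg eH (x j)}"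
    (* trust-region subproblem: s_k is a global minimiser *)
    and sub_feas: "\<And>k. k \<in> K \<Longrightarrow> norm (s k) \<le> \<delta> k"
    and sub_opt: "\<And>k t. k \<in> K \<Longrightarrow> norm t \<le> \<delta> k \<Longrightarrow>
        tr_model f g H (x k) (x k + s k) + (1/2) * eH * (norm (s k))\<^sup>2
          \<le> tr_model f g H (x k) (x k + t) + (1/2) * eH * (norm t)\<^sup>2"
    and rho_def: "\<And>k. k \<in> K \<Longrightarrow> \<rho> k =
        (f (x k) - f (x k + s k)) / (tr_model f g H (x k) (x k) - tr_model f g H (x k) (x k + s k))"
    and succ_step: "\<And>k. k \<in> K \<Longrightarrow> \<rho> k \<ge> \<eta> \<Longrightarrow>
        x (Suc k) = x k + s k \<and>
        \<delta> (Suc k) = (if norm (s k) \<ge> \<psi> * \<delta> k then min (\<gamma>2 * \<delta> k) \<delta>max else \<delta> k)"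
    and unsucc_step: "\<And>k. k \<in> K \<Longrightarrow> \<rho> k < \<eta> \<Longrightarrow>
        x (Suc k) = x k \<and> \<delta> (Suc k) = \<gamma>1 * norm (s k)"
    and S_def: "S = {k \<in> K. \<rho> k \<ge> \<eta>}"
    and U_def: "U = {k \<in> K. \<rho> k < \<eta>}"
    (* standing assumption *)
    and f_low: "\<And>k. k \<in> K \<Longrightarrow> f (x k) \<ge> flow"
    and D_open: "open D"
    and segs: "\<And>k. k \<in> K \<Longrightarrow> closed_segment (x k) (x k + s k) \<subseteq> D"
    and grad: "\<And>y. y \<in> D \<Longrightarrow> (f has_derivative (\<lambda>h. g y \<bullet> h)) (at y)"
    and hess: "\<And>y. y \<in> D \<Longrightarrow> (g has_derivative (\<lambda>h. H y *v h)) (at y)"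
    and Hcont: "continuous_on D H"
    and Lg: "Lg > 0" and g_lip: "\<And>y z. y \<in> D \<Longrightarrow> z \<in> D \<Longrightarrow> norm (g y - g z) \<le> Lg * norm (y - z)"
    and LH: "LH > 0" and H_lip: "\<And>y z. y \<in> D \<Longrightarrow> z \<in> D \<Longrightarrow>
        onorm (\<lambda>v. (H y - H z) *v v) \<le> LH * norm (y - z)"
  shows "U = {} \<or> infinite S \<or>
    (finite U \<and> real (card U) \<le>
       real_of_int \<lfloor>1 + log \<gamma>1 (3 * (1 - \<eta>) / (LH * \<delta>max)) + log \<gamma>1 eH\<rfloor> * real (card S))"
proof -
  have LH0: "LH \<ge> 0" using LH by simp
  define c where "c = 3 * (1 - \<eta>) * eH / LH"
  have c0: "c > 0" using eta eH LH by (simp add: c_def)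
  have Kdown: "k \<in> K" if "Suc k \<in> K" for k using that K_def by auto
  have Kle: "j \<in> K" if "k \<in> K" "j \<le> k" for j k using that K_def by auto
  have KSU: "k \<in> S \<or> k \<in> U" if "k \<in> K" for k using that S_def U_def by auto
  have SK: "S \<subseteq> K" and UK: "U \<subseteq> K" using S_def U_def by auto
  have SU: "k \<notin> S" if "k \<in> U" for k using that S_def U_def by auto
  have xD: "x k \<in> D" if "k \<in> K" for k using seg_point[OF segs[OF that], of 0] by simp
  have dnn: "\<delta> k \<ge> 0" if "k \<in> K" for k using sub_feas[OF that] norm_ge_zero order_trans by blast
  have mod0: "tr_model f g H (x k) (x k + t) = f (x k) + g (x k) \<bullet> t + 1/2 * (t \<bullet> (H (x k) *v t))" for k t
    by (simp add: tr_model_def)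
  have pred: "tr_model f g H (x k) (x k) - tr_model f g H (x k) (x k + s k) \<ge> eH / 2 * norm (s k) ^ 2"
    if k: "k \<in> K" for k
  proof -
    have "tr_model f g H (x k) (x k + s k) + (1/2) * eH * (norm (s k))\<^sup>2
          \<le> tr_model f g H (x k) (x k + 0) + (1/2) * eH * (norm (0::real^'n))\<^sup>2"
      using sub_opt[OF k, of 0] dnn[OF k] by simp
    then show ?thesis by (simp add: tr_model_def)
  qed
  have snz: "s k \<noteq> 0" if k: "k \<in> K" and dk: "\<delta> k > 0" for k
  proof
    assume s0: "s k = 0"
    define G where "G = g (x k)"
    define A where "A = H (x k)"
    have Q: "g (x k) \<bullet> t + 1/2 * (t \<bullet> (H (x k) *v t)) + 1/2 * eH * norm t ^ 2 \<ge> 0"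
      if "norm t \<le> \<delta> k" for t
      using sub_opt[OF k that] s0 by (simp add: tr_model_def)
    have G0: "G = 0"
    proof (rule ccontr)
      assume Gn: "G \<noteq> 0"
      define B where "B = 1/2 * (G \<bullet> (A *v G)) + 1/2 * eH * norm G ^ 2"
      have "G \<bullet> G = 0"
      proof (rule small_bound_zero[of "\<delta> k / norm G" "\<bar>B\<bar>"])
        show "0 < \<delta> k / norm G" using dk Gn by simp
        show "0 \<le> \<bar>B\<bar>" by simp
        fix \<tau> :: real assume \<tau>: "0 < \<tau>" "\<tau> < \<delta> k / norm G"
        have "norm (- \<tau> *\<^sub>R G) \<le> \<delta> k" using \<tau> Gn by (simp add: field_simps)
        from Q[OF this] have q: "G \<bullet> (- \<tau> *\<^sub>R G) + 1/2 * ((- \<tau> *\<^sub>R G) \<bullet> (A *v (- \<tau> *\<^sub>R G))) + 1/2 * eH * norm (- \<tau> *\<^sub>R G) ^ 2 \<ge> 0"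
          by (simp add: G_def A_def)
        have e1: "G \<bullet> (- \<tau> *\<^sub>R G) = - \<tau> * (G \<bullet> G)" by simp
        have e2: "(- \<tau> *\<^sub>R G) \<bullet> (A *v (- \<tau> *\<^sub>R G)) = \<tau>^2 * (G \<bullet> (A *v G))"
          by (subst matrix_vector_mult_scaleR) (simp add: power2_eq_square)
        have e3: "norm (- \<tau> *\<^sub>R G) ^ 2 = \<tau>^2 * norm G ^ 2" by (simp add: power_mult_distrib)
        have "- \<tau> * (G \<bullet> G) + \<tau>^2 * B \<ge> 0"
          using q unfolding e1 e2 e3 B_def by (simp add: algebra_simps)
        then have "\<tau> * (G \<bullet> G) \<le> \<tau> * (\<tau> * B)" by (simp add: power2_eq_square algebra_simps)
        then have "G \<bullet> G \<le> \<tau> * B" using \<tau> by simp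
        also have "\<dots> \<le> \<tau> * \<bar>B\<bar>" using \<tau> by (intro mult_left_mono) auto
        finally show "\<bar>G \<bullet> G\<bar> \<le> \<tau> * \<bar>B\<bar>" by simp
      qed
      then show False using Gn by simp
    qed
    have quadlb: "v \<bullet> (A *v v) \<ge> - eH * (v \<bullet> v)" for v
    proof (cases "v = 0")
      case True then show ?thesis by simp
    next
      case False
      define t where "t = (\<delta> k / norm v) *\<^sub>R v"
      have "norm t \<le> \<delta> k" using False dk by (simp add: t_def)
      from Q[OF this] G0 have q: "1/2 * (t \<bullet> (A *v t)) + 1/2 * eH * norm t ^ 2 \<ge> 0"
        by (simp add: G_def A_def)
      have e2: "t \<bullet> (A *v t) = (\<delta> k / norm v)^2 * (v \<bullet> (A *v v))"
        unfolding t_def by (subst matrix_vector_mult_scaleR) (simp add: power2_eq_square)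
      have e3: "norm t ^ 2 = (\<delta> k / norm v)^2 * (v \<bullet> v)"
        unfolding t_def norm_scaleR power_mult_distrib power2_abs power2_norm_eq_inner ..
      have "(\<delta> k / norm v)^2 * (v \<bullet> (A *v v) + eH * (v \<bullet> v)) \<ge> 0"
        using q unfolding e2 e3 by (simp add: algebra_simps)
      moreover have "(\<delta> k / norm v)^2 > 0" using False dk by simp
      ultimately show ?thesis by (simp add: zero_le_mult_iff)
    qed
    have sym: "(A *v a) \<bullet> b = a \<bullet> (A *v b)" for a b
      unfolding A_def by (rule hess_sym[OF D_open xD[OF k] grad hess H_lip LH0])
    obtain v l where vl: "v \<noteq> 0" "A *v v = l *\<^sub>R v" using sym_eigen[OF sym] by blast
    have "lambda_min A \<ge> - eH"
      unfolding lambda_min_def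
    proof (rule cInf_greatest)
      show "{l. \<exists>v. v \<noteq> 0 \<and> A *v v = l *\<^sub>R v} \<noteq> {}" using vl by blast
      fix l' assume "l' \<in> {l. \<exists>v. v \<noteq> 0 \<and> A *v v = l *\<^sub>R v}"
      then obtain w where w: "w \<noteq> 0" "A *v w = l' *\<^sub>R w" by blast
      have "l' * (w \<bullet> w) \<ge> - eH * (w \<bullet> w)" using quadlb[of w] w by simp
      moreover have "w \<bullet> w > 0" using w by simp
      ultimately have "(- eH) * (w \<bullet> w) \<le> l' * (w \<bullet> w)" "w \<bullet> w > 0" by simp_all
      then show "- eH \<le> l'" by (simp only: mult_le_cancel_right_pos)
    qed
    then have "stationary g H eg eH (x k)"
      using G0 eg by (simp add: stationary_def G_def A_def)
    then show False using k K_def by auto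
  qed
  have succ: "\<rho> k \<ge> \<eta>" if k: "k \<in> K" and sn: "s k \<noteq> 0" and sc: "norm (s k) \<le> c" for k
  proof -
    define P where "P = tr_model f g H (x k) (x k) - tr_model f g H (x k) (x k + s k)"
    define A where "A = f (x k) - f (x k + s k)"
    have P: "P \<ge> eH / 2 * norm (s k) ^ 2" using pred[OF k] by (simp add: P_def)
    have ns: "norm (s k) > 0" using sn by simp
    have "eH / 2 * norm (s k) ^ 2 > 0" using eH ns by simp
    then have P0: "P > 0" using P by linarith
    have tay: "\<bar>f (x k + s k) - f (x k) - g (x k) \<bullet> s k - 1/2 * (s k \<bullet> (H (x k) *v s k))\<bar> \<le> LH / 6 * norm (s k) ^ 3"
      by (rule taylor3[OF segs[OF k] grad hess H_lip])
    have PA: "A \<ge> P - LH / 6 * norm (s k) ^ 3"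
    proof -
      have "P = - (g (x k) \<bullet> s k) - 1/2 * (s k \<bullet> (H (x k) *v s k))"
        unfolding P_def tr_model_def by simp
      then show ?thesis using tay unfolding A_def abs_le_iff by linarith
    qed
    have "LH / 6 * norm (s k) ^ 3 = (LH / 6 * norm (s k)) * norm (s k) ^ 2" by (simp add: power3_eq_cube power2_eq_square)
    also have "\<dots> \<le> (LH / 6 * c) * norm (s k) ^ 2" using sc LH by (intro mult_right_mono) auto
    also have "\<dots> = (1 - \<eta>) * (eH / 2 * norm (s k) ^ 2)" using LH by (simp add: c_def)
    also have "\<dots> \<le> (1 - \<eta>) * P" using eta P by (intro mult_left_mono) auto
    finally have "A \<ge> \<eta> * P" using PA by (simp add: algebra_simps)
    then have "A / P \<ge> \<eta>" using P0 by (simp add: field_simps)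
    then show ?thesis using rho_def[OF k] by (simp add: A_def P_def)
  qed
  have dpos: "k \<in> K \<Longrightarrow> \<delta> k > 0" for k
  proof (induction k)
    case 0 then show ?case using x0_delta0 d0 by simp
  next
    case (Suc k)
    have k: "k \<in> K" using Kdown[OF Suc.prems] .
    have dk: "\<delta> k > 0" using Suc.IH[OF k] .
    show ?case
    proof (cases "\<rho> k \<ge> \<eta>")
      case True
      then show ?thesis using succ_step[OF k True] dk g2 d0 dmax by auto
    next
      case False
      then show ?thesis using unsucc_step[OF k] snz[OF k dk] g1 by auto
    qed
  qed
  have dmaxb: "k \<in> K \<Longrightarrow> \<delta> k \<le> \<delta>max" for k
  proof (induction k)
    case 0 then show ?case using x0_delta0 dmax by simp
  next
    case (Suc k)
    have k: "k \<in> K" using Kdown[OF Suc.prems] .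
    have dk: "\<delta> k \<le> \<delta>max" using Suc.IH[OF k] .
    show ?case
    proof (cases "\<rho> k \<ge> \<eta>")
      case True
      then show ?thesis using succ_step[OF k True] dk by auto
    next
      case False
      have "\<gamma>1 * norm (s k) \<le> 1 * \<delta> k" using g1 sub_feas[OF k] dnn[OF k]
        by (intro mult_mono) auto
      then show ?thesis using unsucc_step[OF k] False dk by auto
    qed
  qed
  have Ubig: "norm (s k) > c" if "k \<in> U" for k
  proof (rule ccontr)
    assume "\<not> norm (s k) > c"
    then have "\<rho> k \<ge> \<eta>" using succ[of k] UK that snz dpos by (auto simp: not_less)
    then show False using that U_def by auto
  qed
  have Unext: "Suc k \<in> K \<and> \<delta> (Suc k) \<le> \<gamma>1 * \<delta> k" if u: "k \<in> U" for k
  proof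
    have k: "k \<in> K" and r: "\<rho> k < \<eta>" using u U_def by auto
    have xs: "x (Suc k) = x k" and ds: "\<delta> (Suc k) = \<gamma>1 * norm (s k)" using unsucc_step[OF k r] by auto
    show "Suc k \<in> K" unfolding K_def
    proof (intro CollectI allI impI)
      fix j assume "j \<le> Suc k"
      then consider "j \<le> k" | "j = Suc k" by linarith
      then show "\<not> stationary g H eg eH (x j)"
      proof cases
        case 1 then show ?thesis using k K_def by auto
      next
        case 2 then show ?thesis using k K_def xs by auto
      qed
    qed
    show "\<delta> (Suc k) \<le> \<gamma>1 * \<delta> k" using ds sub_feas[OF k] g1 by simp
  qed
  define L where "L = log \<gamma>1 (c / \<delta>max)"
  define Nr where "Nr = \<lfloor>1 + log \<gamma>1 (3 * (1 - \<eta>) / (LH * \<delta>max)) + log \<gamma>1 eH\<rfloor>"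
  have dmax0: "\<delta>max > 0" using d0 dmax by simp
  have NrL: "Nr = \<lfloor>1 + L\<rfloor>"
  proof -
    have "log \<gamma>1 (3 * (1 - \<eta>) / (LH * \<delta>max)) + log \<gamma>1 eH = log \<gamma>1 (3 * (1 - \<eta>) / (LH * \<delta>max) * eH)"
      using eta LH dmax0 eH g1 by (subst log_mult) auto
    also have "3 * (1 - \<eta>) / (LH * \<delta>max) * eH = c / \<delta>max" by (simp add: c_def)
    finally show ?thesis by (simp add: Nr_def L_def add.assoc)
  qed
  define Nn where "Nn = nat Nr"
  have powlt: "\<gamma>1 ^ Nn * \<delta>max < c"
  proof -
    have "real Nn > L" using NrL unfolding Nn_def by linarith
    moreover have "ln \<gamma>1 < 0" using g1 by simp
    ultimately have "real Nn * ln \<gamma>1 < L * ln \<gamma>1" by (simp add: mult_strict_right_mono_neg)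
    also have "L * ln \<gamma>1 = ln (c / \<delta>max)" using g1 by (simp add: L_def log_def)
    finally have "ln (\<gamma>1 ^ Nn) < ln (c / \<delta>max)" using g1 by (simp add: ln_realpow)
    then have "\<gamma>1 ^ Nn < c / \<delta>max" using g1 c0 dmax0 by (simp add: ln_less_cancel_iff)
    then show ?thesis using dmax0 by (simp add: field_simps)
  qed
  have nextS: "\<exists>j \<in> S. u < j \<and> j \<le> u + Nn" if u: "u \<in> U" for u
  proof (rule ccontr)
    assume no: "\<not> (\<exists>j \<in> S. u < j \<and> j \<le> u + Nn)"
    have run: "u + i \<in> U \<and> \<delta> (u + i) \<le> \<gamma>1 ^ i * \<delta> u" if "i \<le> Nn" for i
      using that
    proof (induction i)
      case 0 then show ?case using u by simp
    next
      case (Suc i)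
      have IH: "u + i \<in> U" "\<delta> (u + i) \<le> \<gamma>1 ^ i * \<delta> u" using Suc by auto
      have nx: "Suc (u + i) \<in> K" "\<delta> (Suc (u + i)) \<le> \<gamma>1 * \<delta> (u + i)" using Unext[OF IH(1)] by auto
      have "Suc (u + i) \<notin> S" using no Suc.prems by auto
      then have "u + Suc i \<in> U" using KSU[OF nx(1)] by simp
      moreover have "\<delta> (u + Suc i) \<le> \<gamma>1 ^ Suc i * \<delta> u"
      proof -
        have "\<gamma>1 * \<delta> (u + i) \<le> \<gamma>1 * (\<gamma>1 ^ i * \<delta> u)" using IH(2) g1 by (intro mult_left_mono) auto
        then show ?thesis using nx(2) by (simp add: mult.assoc)
      qed
      ultimately show ?case by simp
    qed
    have r: "u + Nn \<in> U" "\<delta> (u + Nn) \<le> \<gamma>1 ^ Nn * \<delta> u" using run[of Nn] by auto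
    have "c < norm (s (u + Nn))" using Ubig[OF r(1)] .
    also have "\<dots> \<le> \<delta> (u + Nn)" using sub_feas r(1) UK by auto
    also have "\<dots> \<le> \<gamma>1 ^ Nn * \<delta> u" using r(2) .
    also have "\<dots> \<le> \<gamma>1 ^ Nn * \<delta>max" using dmaxb[of u] u UK g1 by (intro mult_left_mono) auto
    finally show False using powlt by simp
  qed
  show ?thesis
  proof (cases "U = {} \<or> infinite S")
    case True then show ?thesis by blast
  next
    case False
    then have Une: "U \<noteq> {}" and Sfin: "finite S" by auto
    have cover: "U \<subseteq> (\<Union>j\<in>S. {j - Nn..<j})"
    proof
      fix u assume "u \<in> U"
      then obtain j where "j \<in> S" "u < j" "j \<le> u + Nn" using nextS by blast
      then have "j - Nn \<le> u" by linarith
      then show "u \<in> (\<Union>j\<in>S. {j - Nn..<j})" using \<open>j \<in> S\<close> \<open>u < j\<close> by auto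
    qed
    have finU: "finite U" using Sfin by (intro finite_subset[OF cover]) auto
    have "card U \<le> card (\<Union>j\<in>S. {j - Nn..<j})" using cover Sfin by (intro card_mono) auto
    also have "\<dots> \<le> (\<Sum>j\<in>S. card {j - Nn..<j})" by (rule card_UN_le[OF Sfin])
    also have "\<dots> \<le> (\<Sum>j\<in>S. Nn)" by (intro sum_mono) auto
    also have "\<dots> = Nn * card S" by simp
    finally have cU: "card U \<le> Nn * card S" .
    have "card U > 0" using finU Une by (simp add: card_gt_0_iff)
    then have "Nn > 0" using cU by (cases "Nn = 0") auto
    then have "real Nn = real_of_int Nr" unfolding Nn_def by simp
    then have "real (card U) \<le> real_of_int Nr * real (card S)"
      using cU by (metis of_nat_le_iff of_nat_mult)
    then show ?thesis using finU unfolding Nr_def by blast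
  qed
qed


end
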